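(* For every integer $n\geq 1$, the polynomial $L_n(q)=\sum_{s=0}^{n} L_{n,s}\,q^s$ is unimodal; that is, there is an index $m$ with $L_{n,0}\leq L_{n,1}\leq\cdots\leq L_{n,m}\geq L_{n,m+1}\geq\cdots\geq L_{n,n}$.
   Context: A linear chord diagram with $n$ chords is a partition of $[2n]=\{1,2,\dots,2n\}$ into $n$ blocks of size two, called chords (equivalently, a perfect matching of $[2n]$). For a chord $\{a,b\}$ with $a<b$, its length is $b-a$. A short chord is a chord of length one, i.e. a chord of the form $\{i,i+1\}$. For $0\le s\le n$, $L_{n,s}$ denotes the number of linear chord diagrams with $n$ chords having exactly $s$ short chords. *)

theory Defs
  imports Main
begin

definition chord_diagrams :: "nat \<Rightarrow> nat set set set" where
  "chord_diagrams n = {P. (\<Union>P) = {1..2*n} \<and> (\<forall>c\<in>P. card c = 2)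
      \<and> (\<forall>c\<in>P. \<forall>d\<in>P. c \<noteq> d \<longrightarrow> c \<inter> d = {})}"

definition short_chords :: "nat set set \<Rightarrow> nat set set" where
  "short_chords P = {c\<in>P. \<exists>i. c = {i, Suc i}}"

definition L :: "nat \<Rightarrow> nat \<Rightarrow> nat" where
  "L n s = card {P \<in> chord_diagrams n. card (short_chords P) = s}"

end

theory Submission
  imports Defs
begin

definition ee :: "nat \<Rightarrow> nat \<Rightarrow> nat \<Rightarrow> nat" where
  "ee p q x = (if x < p then x else if x + 1 < q then x + 1 else x + 2)"
definition rr :: "nat \<Rightarrow> nat \<Rightarrow> nat \<Rightarrow> nat" where
  "rr p q y = (if y < p then y else if y < q then y - 1 else y - 2)"
definition ins :: "nat \<Rightarrow> nat \<Rightarrow> nat set set \<Rightarrow> nat set set" where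
  "ins p q D = insert {p,q} ((`) (ee p q) ` D)"

lemma ee_mono: "p < q \<Longrightarrow> x < y \<Longrightarrow> ee p q x < ee p q y"
  unfolding ee_def by auto

lemma ee_inj: "p < q \<Longrightarrow> inj (ee p q)"
  by (metis ee_mono injI linorder_neqE_nat less_irrefl)

lemma rr_ee: "p < q \<Longrightarrow> rr p q (ee p q x) = x"
  unfolding ee_def rr_def by auto

lemma ee_rr: "p < q \<Longrightarrow> y \<noteq> p \<Longrightarrow> y \<noteq> q \<Longrightarrow> ee p q (rr p q y) = y"
  unfolding ee_def rr_def by auto

lemma ee_ne: "p < q \<Longrightarrow> ee p q x \<noteq> p \<and> ee p q x \<noteq> q"
  unfolding ee_def by auto

lemma ee_suc: "p < q \<Longrightarrow> Suc x \<noteq> p \<Longrightarrow> \<not> (p \<le> x \<and> Suc (Suc x) = q) \<Longrightarrow> ee p q (Suc x) = Suc (ee p q x)"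
  unfolding ee_def by auto

lemma ee_suc2: "p < q \<Longrightarrow> a < b \<Longrightarrow> ee p q b = Suc (ee p q a) \<Longrightarrow> b = Suc a"
proof (rule ccontr)
  assume a: "p < q" "a < b" "ee p q b = Suc (ee p q a)" "b \<noteq> Suc a"
  then have "Suc a < b" by auto
  then have "ee p q (Suc a) < ee p q b" using ee_mono[OF a(1)] by blast
  moreover have "ee p q a < ee p q (Suc a)" using ee_mono[OF a(1)] by blast
  ultimately show False using a(3) by linarith
qed

lemma ee_range: "1 \<le> p \<Longrightarrow> p < q \<Longrightarrow> q \<le> 2*m+2 \<Longrightarrow> ee p q ` {1..2*m} = {1..2*m+2} - {p,q}"
proof
  assume a: "1 \<le> p" "p < q" "q \<le> 2*m+2"
  show "ee p q ` {1..2*m} \<subseteq> {1..2*m+2} - {p,q}"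
  proof
    fix y assume "y \<in> ee p q ` {1..2*m}"
    then obtain x where x: "x \<in> {1..2*m}" "y = ee p q x" by blast
    have "y \<in> {1..2*m+2}" using x by (auto simp: ee_def)
    moreover have "y \<noteq> p" "y \<noteq> q" using ee_ne[OF a(2)] x by auto
    ultimately show "y \<in> {1..2*m+2} - {p,q}" by blast
  qed
  show "{1..2*m+2} - {p,q} \<subseteq> ee p q ` {1..2*m}"
  proof
    fix y assume y: "y \<in> {1..2*m+2} - {p,q}"
    have "rr p q y \<in> {1..2*m}" using y a by (auto simp: rr_def)
    moreover have "y = ee p q (rr p q y)" using ee_rr a y by auto
    ultimately show "y \<in> ee p q ` {1..2*m}" by blast
  qed
qed

lemma CD_sub: "D \<in> chord_diagrams n \<Longrightarrow> c \<in> D \<Longrightarrow> c \<subseteq> {1..2*n}"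
  unfolding chord_diagrams_def by blast

lemma CD_disj: "D \<in> chord_diagrams n \<Longrightarrow> c \<in> D \<Longrightarrow> d \<in> D \<Longrightarrow> c \<noteq> d \<Longrightarrow> c \<inter> d = {}"
  unfolding chord_diagrams_def by blast

lemma finite_CD: "finite (chord_diagrams n)"
proof -
  have "chord_diagrams n \<subseteq> Pow (Pow {1..2*n})" using CD_sub by blast
  then show ?thesis by (rule finite_subset) auto
qed

lemma finite_D: "D \<in> chord_diagrams n \<Longrightarrow> finite D"
  by (rule finite_subset[of _ "Pow {1..2*n}"]) (use CD_sub in auto)

lemma finite_short: "D \<in> chord_diagrams n \<Longrightarrow> finite (short_chords D)"
  using finite_D unfolding short_chords_def by auto

lemma ins_CD:
  assumes D: "D \<in> chord_diagrams m" and a: "1 \<le> p" "p < q" "q \<le> 2*m+2"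
  shows "ins p q D \<in> chord_diagrams (Suc m)"
proof -
  let ?e = "ee p q"
  have inj: "inj ?e" using ee_inj a by auto
  have U: "\<Union>D = {1..2*m}" and C: "\<forall>c\<in>D. card c = 2"
    and J: "\<forall>c\<in>D. \<forall>d\<in>D. c \<noteq> d \<longrightarrow> c \<inter> d = {}"
    using D unfolding chord_diagrams_def by auto
  have "\<Union>(ins p q D) = {p,q} \<union> ?e ` \<Union>D" unfolding ins_def by auto
  also have "\<dots> = {1..2 * Suc m}" using U ee_range[OF a] a by auto
  finally have 1: "\<Union>(ins p q D) = {1..2 * Suc m}" .
  have 2: "\<forall>c\<in>ins p q D. card c = 2"
    using C a inj unfolding ins_def by (auto simp: card_image inj_on_subset)
  have ne: "\<And>c. {p,q} \<inter> ?e ` c = {}" using ee_ne[OF a(2)] by (auto simp del: insert_disjoint)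
  have 3: "\<forall>c\<in>ins p q D. \<forall>d\<in>ins p q D. c \<noteq> d \<longrightarrow> c \<inter> d = {}"
  proof (intro ballI impI)
    fix c d assume c: "c \<in> ins p q D" and d: "d \<in> ins p q D" and cd: "c \<noteq> d"
    show "c \<inter> d = {}"
    proof (cases "c = {p,q}")
      case True
      then show ?thesis using d cd ne unfolding ins_def by auto
    next
      case False
      then obtain c' where c': "c' \<in> D" "c = ?e ` c'" using c unfolding ins_def by auto
      show ?thesis
      proof (cases "d = {p,q}")
        case True then show ?thesis using c' ne by auto
      next
        case False
        then obtain d' where d': "d' \<in> D" "d = ?e ` d'" using d unfolding ins_def by auto
        have "c' \<noteq> d'" using cd c' d' by auto
        then have "c' \<inter> d' = {}" using J c' d' by auto
        then show ?thesis using c' d' inj by (simp add: image_Int[symmetric])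
      qed
    qed
  qed
  show ?thesis unfolding chord_diagrams_def using 1 2 3 by blast
qed

lemma ins_inj:
  assumes "p < q" "ins p q D1 = ins p q D2" shows "D1 = D2"
proof -
  let ?e = "ee p q"
  have inj: "inj ?e" using ee_inj assms by auto
  have nin: "\<And>D. {p,q} \<notin> (`) ?e ` D"
  proof
    fix D assume "{p,q} \<in> (`) ?e ` D"
    then obtain c where "{p,q} = ?e ` c" by auto
    then have "p \<in> ?e ` c" by auto
    then obtain x where "p = ?e x" by auto
    then show False using ee_ne[OF assms(1), of x] by simp
  qed
  have "(`) ?e ` D1 = (`) ?e ` D2"
    using assms(2) nin unfolding ins_def by (metis insert_ident)
  moreover have "inj ((`) ?e)" using inj by (simp add: inj_on_def inj_image_eq_iff)
  ultimately show ?thesis by (simp add: inj_image_eq_iff)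
qed

lemma ins_surj:
  assumes D: "D \<in> chord_diagrams (Suc m)" and pq: "{p,q} \<in> D" and a: "1 \<le> p" "p < q" "q \<le> 2*m+2"
  shows "\<exists>D'\<in>chord_diagrams m. D = ins p q D'"
proof -
  let ?e = "ee p q" and ?r = "rr p q"
  let ?S = "{1..2*m+2} - {p,q}"
  let ?D0 = "D - {{p,q}}"
  have U: "\<Union>D = {1..2*Suc m}" and C: "\<forall>c\<in>D. card c = 2"
    and J: "\<forall>c\<in>D. \<forall>d\<in>D. c \<noteq> d \<longrightarrow> c \<inter> d = {}"
    using D unfolding chord_diagrams_def by auto
  have sub: "\<And>c. c \<in> ?D0 \<Longrightarrow> c \<subseteq> ?S"
  proof -
    fix c assume c: "c \<in> ?D0"
    then have "c \<inter> {p,q} = {}" using J pq by auto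
    moreover have "c \<subseteq> {1..2*m+2}" using U c by auto
    ultimately show "c \<subseteq> ?S" by auto
  qed
  have U0: "\<Union>?D0 = ?S"
  proof
    show "\<Union>?D0 \<subseteq> ?S" using sub by blast
    show "?S \<subseteq> \<Union>?D0"
    proof
      fix y assume y: "y \<in> ?S"
      then have "y \<in> \<Union>D" using U by auto
      then obtain c where "c \<in> D" "y \<in> c" by auto
      moreover have "c \<noteq> {p,q}" using y \<open>y \<in> c\<close> by auto
      ultimately show "y \<in> \<Union>?D0" by auto
    qed
  qed
  have er: "\<And>y. y \<in> ?S \<Longrightarrow> ?e (?r y) = y" using ee_rr a by auto
  have injr: "inj_on ?r ?S" by (rule inj_on_inverseI[where g = ?e]) (use er in auto)
  define DD where "DD = (`) ?r ` ?D0"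
  have bk: "\<And>c. c \<in> ?D0 \<Longrightarrow> ?e ` ?r ` c = c"
  proof -
    fix c assume "c \<in> ?D0"
    then have "\<And>y. y \<in> c \<Longrightarrow> ?e (?r y) = y" using er sub by blast
    then show "?e ` ?r ` c = c" by (simp add: image_image)
  qed
  have "(`) ?e ` DD = ?D0"
  proof -
    have "(`) ?e ` DD = (\<lambda>c. ?e ` ?r ` c) ` ?D0" unfolding DD_def by (simp add: image_image)
    also have "\<dots> = ?D0" using bk by simp
    finally show ?thesis .
  qed
  then have eq: "D = ins p q DD" unfolding ins_def using pq by auto
  have "\<Union>DD = ?r ` ?S" unfolding DD_def using U0 by auto
  also have "\<dots> = ?r ` ?e ` {1..2*m}" using ee_range[OF a] by simp
  also have "\<dots> = {1..2*m}" using rr_ee a by (simp add: image_image)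
  finally have 1: "\<Union>DD = {1..2*m}" .
  have 2: "\<forall>c\<in>DD. card c = 2"
  proof
    fix c assume "c \<in> DD"
    then obtain c0 where c0: "c0 \<in> ?D0" "c = ?r ` c0" unfolding DD_def by auto
    have "inj_on ?r c0" using injr sub[OF c0(1)] by (rule inj_on_subset)
    then show "card c = 2" using c0 C by (simp add: card_image)
  qed
  have 3: "\<forall>c\<in>DD. \<forall>d\<in>DD. c \<noteq> d \<longrightarrow> c \<inter> d = {}"
  proof (intro ballI impI)
    fix c d assume "c \<in> DD" "d \<in> DD" "c \<noteq> d"
    then obtain c0 d0 where c0: "c0 \<in> ?D0" "c = ?r ` c0" and d0: "d0 \<in> ?D0" "d = ?r ` d0"
      unfolding DD_def by auto
    have "c0 \<noteq> d0" using c0 d0 \<open>c \<noteq> d\<close> by auto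
    then have "c0 \<inter> d0 = {}" using J c0 d0 by auto
    moreover have "?r ` (c0 \<inter> d0) = ?r ` c0 \<inter> ?r ` d0"
      by (rule inj_on_image_Int[OF injr sub[OF c0(1)] sub[OF d0(1)]])
    ultimately show "c \<inter> d = {}" using c0 d0 by simp
  qed
  have "DD \<in> chord_diagrams m" unfolding chord_diagrams_def using 1 2 3 by blast
  then show ?thesis using eq by blast
qed


lemma short_ins:
  assumes D: "D \<in> chord_diagrams m" and a: "1 \<le> p" "p < q" "q \<le> 2*m+2"
    and H: "q = Suc p \<or> q = 2*m+2"
  shows "short_chords (ins p q D) = (if q = Suc p then {{p,q}} else {}) \<union> (`) (ee p q) ` (short_chords D - {{p-1,p}})"
    (is "?L = ?R")
proof
  let ?e = "ee p q"
  have U: "\<Union>D = {1..2*m}" and C: "\<forall>c\<in>D. card c = 2"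
    using D unfolding chord_diagrams_def by auto
  show "?L \<subseteq> ?R"
  proof
    fix c assume c: "c \<in> ?L"
    then obtain i where ci: "c = {i, Suc i}" "c \<in> ins p q D" unfolding short_chords_def by auto
    show "c \<in> ?R"
    proof (cases "c = {p,q}")
      case True
      then have "p = i \<and> q = Suc i" using ci a(2) by (auto simp: doubleton_eq_iff)
      then show ?thesis using True by auto
    next
      case False
      then obtain c' where c': "c' \<in> D" "c = ?e ` c'" using ci unfolding ins_def by auto
      then have "card c' = 2" using C by auto
      then obtain x y where xy: "c' = {x,y}" "x \<noteq> y" by (auto simp: card_2_iff)
      define a0 where "a0 = min x y"
      define b0 where "b0 = max x y"
      have ab: "c' = {a0,b0}" "a0 < b0" using xy unfolding a0_def b0_def by (auto simp: min_def max_def)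
      have lt: "?e a0 < ?e b0" using ee_mono[OF a(2) ab(2)] .
      have "{?e a0, ?e b0} = {i, Suc i}" using ci c' ab by auto
      then have ea: "?e a0 = i" "?e b0 = Suc i" using lt by (auto simp: doubleton_eq_iff)
      then have b: "b0 = Suc a0" using ee_suc2[OF a(2) ab(2)] by simp
      have nb: "c' \<noteq> {p-1,p}"
      proof
        assume "c' = {p-1,p}"
        then have "a0 = p - 1" "b0 = p" using ab b a(1) by (auto simp: doubleton_eq_iff)
        then have "?e a0 = p - 1" "?e b0 \<noteq> p" using a ee_ne[OF a(2)] by (auto simp: ee_def)
        moreover have "?e b0 \<ge> p"
        proof -
          have "?e b0 \<ge> b0" unfolding ee_def by auto
          then show ?thesis using \<open>b0 = p\<close> by simp
        qed
        ultimately show False using ea a(1) by simp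
      qed
      have "c' \<in> short_chords D" using c' ab b unfolding short_chords_def by auto
      then show ?thesis using nb c' by auto
    qed
  qed
  show "?R \<subseteq> ?L"
  proof
    fix c assume c: "c \<in> ?R"
    show "c \<in> ?L"
    proof (cases "c \<in> (if q = Suc p then {{p,q}} else {})")
      case True
      then have cq: "c = {p, Suc p}" "q = Suc p" by (auto split: if_splits)
      then have "c \<in> ins p q D" unfolding ins_def by simp
      then show ?thesis unfolding short_chords_def using cq(1) by blast
    next
      case False
      then obtain c' where c': "c' \<in> short_chords D" "c' \<noteq> {p-1,p}" "c = ?e ` c'" using c by auto
      then obtain x where x: "c' = {x, Suc x}" "c' \<in> D" unfolding short_chords_def by auto
      have "Suc x \<in> \<Union>D" using x by blast
      then have sx: "Suc x \<le> 2*m" using U by simp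
      have n1: "Suc x \<noteq> p"
      proof
        assume "Suc x = p" then have "x = p - 1" by simp
        then show False using c' x \<open>Suc x = p\<close> by simp
      qed
      have n2: "\<not> (p \<le> x \<and> Suc (Suc x) = q)" using H n1 sx by linarith
      have "c = {?e x, ?e (Suc x)}" using c' x by simp
      then have cc: "c = {?e x, Suc (?e x)}" using ee_suc[OF a(2) n1 n2] by simp
      moreover have "c \<in> ins p q D" using c' x unfolding ins_def by blast
      ultimately show ?thesis unfolding short_chords_def by blast
    qed
  qed
qed

lemma cs_ins:
  assumes D: "D \<in> chord_diagrams m" and a: "1 \<le> p" "p < q" "q \<le> 2*m+2"
    and H: "q = Suc p \<or> q = 2*m+2"
  shows "card (short_chords (ins p q D)) = (if q = Suc p then 1 else 0) + (card (short_chords D) - (if {p-1,p} \<in> D then 1 else 0))"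
proof -
  let ?e = "ee p q"
  have inj: "inj ((`) ?e)" using ee_inj[OF a(2)] by (simp add: inj_on_def inj_image_eq_iff)
  have fin: "finite (short_chords D)" using finite_short D by auto
  have nin: "{p,q} \<notin> (`) ?e ` X" for X
  proof
    assume "{p,q} \<in> (`) ?e ` X"
    then obtain c where "{p,q} = ?e ` c" by auto
    then have "p \<in> ?e ` c" by auto
    then obtain x where "p = ?e x" by auto
    then show False using ee_ne[OF a(2), of x] by simp
  qed
  have "card ((`) ?e ` (short_chords D - {{p-1,p}})) = card (short_chords D - {{p-1,p}})"
    using inj by (simp add: card_image inj_on_subset)
  also have "\<dots> = card (short_chords D) - (if {p-1,p} \<in> D then 1 else 0)"
  proof -
    have "{p-1,p} \<in> short_chords D \<longleftrightarrow> {p-1,p} \<in> D"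
      using a(1) unfolding short_chords_def by (auto intro!: exI[of _ "p-1"])
    then show ?thesis by (simp add: card_Diff_singleton_if)
  qed
  finally have E: "card ((`) ?e ` (short_chords D - {{p-1,p}})) = card (short_chords D) - (if {p-1,p} \<in> D then 1 else 0)" .
  have finI: "finite ((`) ?e ` (short_chords D - {{p-1,p}}))" using fin by auto
  show ?thesis
  proof (cases "q = Suc p")
    case True
    then show ?thesis using short_ins[OF D a H] E nin finI by simp
  next
    case False
    then show ?thesis using short_ins[OF D a H] E by simp
  qed
qed

lemma card_gaps:
  assumes D: "D \<in> chord_diagrams m" and N: "2*m \<le> N"
  shows "card {i\<in>{1..N}. {i-1,i} \<in> D} = card (short_chords D)"
proof -
  let ?A = "{i\<in>{1..N}. {i-1,i} \<in> D}"
  let ?f = "\<lambda>i::nat. {i-1,i}"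
  have U: "\<Union>D = {1..2*m}" using D unfolding chord_diagrams_def by auto
  have inj: "inj_on ?f ?A"
  proof
    fix i j assume "i \<in> ?A" "j \<in> ?A" "?f i = ?f j"
    then show "i = j" by (auto simp: doubleton_eq_iff)
  qed
  have "?f ` ?A = short_chords D"
  proof
    show "?f ` ?A \<subseteq> short_chords D"
      unfolding short_chords_def by (auto intro!: exI[of _ "_ - 1"])
    show "short_chords D \<subseteq> ?f ` ?A"
    proof
      fix c assume "c \<in> short_chords D"
      then obtain x where x: "c = {x, Suc x}" "c \<in> D" unfolding short_chords_def by auto
      then have "x \<in> {1..2*m}" "Suc x \<in> {1..2*m}" using U by auto
      then have "Suc x \<in> ?A" using x N by auto
      moreover have "c = ?f (Suc x)" using x by auto
      ultimately show "c \<in> ?f ` ?A" by blast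
    qed
  qed
  then show ?thesis using card_image[OF inj] by simp
qed


lemma sum_if_const: "finite A \<Longrightarrow> (\<Sum>x\<in>A. if P x then (c::nat) else 0) = c * card {x\<in>A. P x}"
proof -
  assume "finite A"
  then have "(\<Sum>x\<in>A. if P x then c else 0) = (\<Sum>x\<in>{x\<in>A. P x}. c)"
    using sum.inter_filter[of A "\<lambda>_. c" P] by simp
  then show ?thesis by (simp add: mult.commute)
qed

lemma per_A:
  assumes D: "D \<in> chord_diagrams m" and s: "1 \<le> s"
  shows "card {i\<in>{1..2*m+1}. card (short_chords (ins i (Suc i) D)) = s}
    = (if card (short_chords D) = s then s else 0) + (if Suc (card (short_chords D)) = s then 2*Suc m - s else 0)"
proof -
  let ?t = "card (short_chords D)"
  let ?I = "{1..2*m+1}"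
  let ?G = "{i\<in>?I. {i-1,i} \<in> D}"
  have cG: "card ?G = ?t" using card_gaps[OF D] by simp
  have val: "card (short_chords (ins i (Suc i) D)) = 1 + (?t - (if {i-1,i} \<in> D then 1 else 0))"
    if "i \<in> ?I" for i
    using cs_ins[OF D, of i "Suc i"] that by auto
  have tpos: "1 \<le> ?t" if "i \<in> ?G" for i
  proof -
    have "finite ?G" by (rule finite_subset[of _ ?I]) auto
    then have "card ?G \<noteq> 0" using that by (metis card_0_eq empty_iff)
    then show ?thesis using cG by linarith
  qed
  have S: "{i\<in>?I. card (short_chords (ins i (Suc i) D)) = s} = {i\<in>?I. if i \<in> ?G then ?t = s else Suc ?t = s}"
  proof -
    have "card (short_chords (ins i (Suc i) D)) = s \<longleftrightarrow> (if i \<in> ?G then ?t = s else Suc ?t = s)" if "i \<in> ?I" for i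
      using val[OF that] tpos[of i] that by auto
    then show ?thesis by blast
  qed
  show ?thesis
  proof (cases "?t = s")
    case True
    then have "{i\<in>?I. if i \<in> ?G then ?t = s else Suc ?t = s} = ?G" by auto
    then show ?thesis using S cG True by simp
  next
    case F: False
    show ?thesis
    proof (cases "Suc ?t = s")
      case True
      then have "{i\<in>?I. if i \<in> ?G then ?t = s else Suc ?t = s} = ?I - ?G" by auto
      moreover have "card (?I - ?G) = 2*m+1 - ?t" using cG by (subst card_Diff_subset) auto
      ultimately show ?thesis using S F True by simp
    next
      case False
      then have "{i\<in>?I. if i \<in> ?G then ?t = s else Suc ?t = s} = {}" using F by auto
      then show ?thesis using S F False by simp
    qed
  qed
qed

lemma rec_A:
  assumes s: "1 \<le> s"
  shows "s * L (Suc m) s = s * L m s + (2*Suc m - s) * L m (s-1)"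
proof -
  let ?cs = "\<lambda>D. card (short_chords D)"
  let ?A = "{D\<in>chord_diagrams (Suc m). ?cs D = s}"
  let ?X = "Sigma ?A short_chords"
  let ?Y = "Sigma (chord_diagrams m) (\<lambda>D'. {i\<in>{1..2*m+1}. ?cs (ins i (Suc i) D') = s})"
  let ?F = "\<lambda>(D'::nat set set, i::nat). (ins i (Suc i) D', {i, Suc i})"
  have finA: "finite ?A" using finite_CD by simp
  have "card ?X = (\<Sum>D\<in>?A. ?cs D)"
    by (rule card_SigmaI) (use finA finite_short in auto)
  also have "\<dots> = (\<Sum>D\<in>?A. s)" by (rule sum.cong) auto
  also have "\<dots> = s * L (Suc m) s" unfolding L_def by simp
  finally have cX: "card ?X = s * L (Suc m) s" .
  have XY: "?X = ?F ` ?Y"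
  proof
    show "?F ` ?Y \<subseteq> ?X"
    proof
      fix z assume "z \<in> ?F ` ?Y"
      then obtain D' i where Di: "D' \<in> chord_diagrams m" "i \<in> {1..2*m+1}" "?cs (ins i (Suc i) D') = s"
        "z = (ins i (Suc i) D', {i, Suc i})" by auto
      have "ins i (Suc i) D' \<in> chord_diagrams (Suc m)" using ins_CD[OF Di(1)] Di(2) by auto
      moreover have "{i, Suc i} \<in> short_chords (ins i (Suc i) D')"
        unfolding short_chords_def ins_def by auto
      ultimately show "z \<in> ?X" using Di by auto
    qed
    show "?X \<subseteq> ?F ` ?Y"
    proof
      fix z assume "z \<in> ?X"
      then obtain D c where Dc: "z = (D, c)" "D \<in> chord_diagrams (Suc m)" "?cs D = s" "c \<in> short_chords D" by auto
      then obtain i where ci: "c = {i, Suc i}" "c \<in> D" unfolding short_chords_def by auto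
      have U: "\<Union>D = {1..2*Suc m}" using Dc(2) unfolding chord_diagrams_def by auto
      have "i \<in> \<Union>D" "Suc i \<in> \<Union>D" using ci by auto
      then have ir: "1 \<le> i" "Suc i \<le> 2*m+2" using U by auto
      obtain D' where D': "D' \<in> chord_diagrams m" "D = ins i (Suc i) D'"
        using ins_surj[OF Dc(2), of i "Suc i"] ci ir by auto
      have "(D', i) \<in> ?Y" using D' Dc ir by auto
      moreover have "z = ?F (D', i)" using D' Dc ci by auto
      ultimately show "z \<in> ?F ` ?Y" by blast
    qed
  qed
  have inj: "inj_on ?F ?Y"
  proof (rule inj_onI)
    fix x y assume x: "x \<in> ?Y" and y: "y \<in> ?Y" and e: "?F x = ?F y"
    obtain D1 i1 where x': "x = (D1, i1)" by (cases x)
    obtain D2 i2 where y': "y = (D2, i2)" by (cases y)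
    have "{i1, Suc i1} = {i2, Suc i2}" using e x' y' by simp
    then have ii: "i1 = i2" by (auto simp: doubleton_eq_iff)
    then have "D1 = D2" using e x' y' ins_inj[of i1 "Suc i1" D1 D2] by simp
    then show "x = y" using x' y' ii by simp
  qed
  have "card ?Y = (\<Sum>D'\<in>chord_diagrams m. card {i\<in>{1..2*m+1}. ?cs (ins i (Suc i) D') = s})"
    by (rule card_SigmaI) (use finite_CD in auto)
  also have "\<dots> = (\<Sum>D'\<in>chord_diagrams m. (if ?cs D' = s then s else 0) + (if Suc (?cs D') = s then 2*Suc m - s else 0))"
    by (rule sum.cong[OF refl], rule per_A[OF _ s])
  also have "\<dots> = s * card {D'\<in>chord_diagrams m. ?cs D' = s} + (2*Suc m - s) * card {D'\<in>chord_diagrams m. Suc (?cs D') = s}"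
    by (simp only: sum.distrib sum_if_const[OF finite_CD])
  also have "{D'\<in>chord_diagrams m. Suc (?cs D') = s} = {D'\<in>chord_diagrams m. ?cs D' = s - 1}"
    using s by auto
  finally have cY: "card ?Y = s * L m s + (2*Suc m - s) * L m (s-1)" unfolding L_def .
  have "card ?X = card ?Y" unfolding XY by (rule card_image[OF inj])
  then show ?thesis using cX cY by simp
qed


lemma per_B:
  assumes D: "D \<in> chord_diagrams m"
  shows "card {j\<in>{1..2*m+1}. card (short_chords (ins j (2*m+2) D)) = 0}
    = (if card (short_chords D) = 0 then 2*m else 0) + (if card (short_chords D) = 1 then 1 else 0)"
proof -
  let ?t = "card (short_chords D)"
  let ?I = "{1..2*m+1}"
  let ?G = "{i\<in>?I. {i-1,i} \<in> D}"
  have U: "\<Union>D = {1..2*m}" using D unfolding chord_diagrams_def by auto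
  have cG: "card ?G = ?t" using card_gaps[OF D] by simp
  have fG: "finite ?G" by (rule finite_subset[of _ ?I]) auto
  have val: "card (short_chords (ins j (2*m+2) D)) = (if 2*m+2 = Suc j then 1 else 0) + (?t - (if {j-1,j} \<in> D then 1 else 0))"
    if "j \<in> ?I" for j
    using cs_ins[OF D, of j "2*m+2"] that by auto
  have jle: "j \<le> 2*m" if "{j-1,j} \<in> D" for j
  proof -
    have "j \<in> \<Union>D" using that by blast
    then show ?thesis using U by simp
  qed
  show ?thesis
  proof (cases "?t = 0")
    case True
    then have "?G = {}" using cG fG by simp
    have "card (short_chords (ins j (2*m+2) D)) = 0 \<longleftrightarrow> j \<le> 2*m" if "j \<in> ?I" for j
    proof -
      have "{j-1,j} \<notin> D" using \<open>?G = {}\<close> that by blast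
      then show ?thesis using val[OF that] True that by auto
    qed
    then have "{j\<in>?I. card (short_chords (ins j (2*m+2) D)) = 0} = {j\<in>?I. j \<le> 2*m}" by blast
    also have "\<dots> = {1..2*m}" by auto
    finally have "{j\<in>?I. card (short_chords (ins j (2*m+2) D)) = 0} = {1..2*m}" .
    then show ?thesis using True by simp
  next
    case F: False
    show ?thesis
    proof (cases "?t = 1")
      case True
      have "{j\<in>?I. card (short_chords (ins j (2*m+2) D)) = 0} = ?G"
      proof -
        have "card (short_chords (ins j (2*m+2) D)) = 0 \<longleftrightarrow> {j-1,j} \<in> D" if "j \<in> ?I" for j
          using val[OF that] True jle[of j] by auto
        then show ?thesis by blast
      qed
      then show ?thesis using True cG by simp
    next
      case False
      have "{j\<in>?I. card (short_chords (ins j (2*m+2) D)) = 0} = {}"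
      proof -
        have "card (short_chords (ins j (2*m+2) D)) \<noteq> 0" if "j \<in> ?I" for j
          using val[OF that] False F by auto
        then show ?thesis by blast
      qed
      then show ?thesis using False F by simp
    qed
  qed
qed

lemma rec_B: "L (Suc m) 0 = 2*m * L m 0 + L m 1"
proof -
  let ?cs = "\<lambda>D. card (short_chords D)"
  let ?Q = "2*m+2"
  let ?Z = "{D\<in>chord_diagrams (Suc m). ?cs D = 0}"
  let ?Y = "Sigma (chord_diagrams m) (\<lambda>D'. {j\<in>{1..2*m+1}. ?cs (ins j ?Q D') = 0})"
  let ?F = "\<lambda>(D'::nat set set, j::nat). ins j ?Q D'"
  have ZY: "?Z = ?F ` ?Y"
  proof
    show "?F ` ?Y \<subseteq> ?Z"
    proof
      fix z assume "z \<in> ?F ` ?Y"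
      then obtain D' j where Dj: "D' \<in> chord_diagrams m" "j \<in> {1..2*m+1}" "?cs (ins j ?Q D') = 0"
        "z = ins j ?Q D'" by auto
      have "ins j ?Q D' \<in> chord_diagrams (Suc m)" using ins_CD[OF Dj(1)] Dj(2) by auto
      then show "z \<in> ?Z" using Dj by auto
    qed
    show "?Z \<subseteq> ?F ` ?Y"
    proof
      fix D assume DZ: "D \<in> ?Z"
      then have DC: "D \<in> chord_diagrams (Suc m)" by auto
      have U: "\<Union>D = {1..2*Suc m}" and C: "\<forall>c\<in>D. card c = 2"
        using DC unfolding chord_diagrams_def by auto
      have "?Q \<in> \<Union>D" using U by simp
      then obtain c where c: "c \<in> D" "?Q \<in> c" by blast
      then have "card c = 2" using C by auto
      then obtain x y where xy: "c = {x,y}" "x \<noteq> y" by (auto simp: card_2_iff)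
      obtain j where j: "c = {j, ?Q}" "j \<noteq> ?Q"
      proof (cases "x = ?Q")
        case True then show ?thesis using that[of y] xy by (auto simp: insert_commute)
      next
        case False then show ?thesis using that[of x] xy c by auto
      qed
      have "j \<in> \<Union>D" using j c by blast
      then have jr: "1 \<le> j" "j < ?Q" using U j by auto
      obtain D' where D': "D' \<in> chord_diagrams m" "D = ins j ?Q D'"
        using ins_surj[OF DC, of j ?Q] j c jr by auto
      have "(D', j) \<in> ?Y" using D' DZ jr by auto
      moreover have "D = ?F (D', j)" using D' by simp
      ultimately show "D \<in> ?F ` ?Y" by blast
    qed
  qed
  have inj: "inj_on ?F ?Y"
  proof (rule inj_onI)
    fix x y assume x: "x \<in> ?Y" and y: "y \<in> ?Y" and e: "?F x = ?F y"
    obtain D1 j1 where x': "x = (D1, j1)" by (cases x)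
    obtain D2 j2 where y': "y = (D2, j2)" by (cases y)
    have r1: "D1 \<in> chord_diagrams m" "1 \<le> j1" "j1 \<le> 2*m+1" using x x' by auto
    have r2: "j2 \<le> 2*m+1" using y y' by auto
    let ?D = "ins j1 ?Q D1"
    have DC: "?D \<in> chord_diagrams (Suc m)" using ins_CD[OF r1(1)] r1 by simp
    have m1: "{j1, ?Q} \<in> ?D" unfolding ins_def by simp
    have e2: "ins j2 ?Q D2 = ?D" using e x' y' by simp
    have "{j2, ?Q} \<in> ins j2 ?Q D2" unfolding ins_def by simp
    then have m2: "{j2, ?Q} \<in> ?D" using e2 by simp
    have jj: "j1 = j2"
    proof (rule ccontr)
      assume "j1 \<noteq> j2"
      then have "j1 \<notin> {j2, ?Q}" using r1 by simp
      then have "{j1, ?Q} \<noteq> {j2, ?Q}" by blast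
      then have "{j1, ?Q} \<inter> {j2, ?Q} = {}" using CD_disj[OF DC m1 m2] by blast
      then show False by auto
    qed
    then have "ins j1 ?Q D2 = ins j1 ?Q D1" using e2 by simp
    then have "D1 = D2" using ins_inj[of j1 ?Q D2 D1] r1 by simp
    then show "x = y" using x' y' jj by simp
  qed
  have "L (Suc m) 0 = card ?Z" unfolding L_def by simp
  also have "\<dots> = card ?Y" unfolding ZY by (rule card_image[OF inj])
  also have "\<dots> = (\<Sum>D'\<in>chord_diagrams m. card {j\<in>{1..2*m+1}. ?cs (ins j ?Q D') = 0})"
    by (rule card_SigmaI) (use finite_CD in auto)
  also have "\<dots> = (\<Sum>D'\<in>chord_diagrams m. (if ?cs D' = 0 then 2*m else 0) + (if ?cs D' = 1 then 1 else 0))"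
    by (rule sum.cong[OF refl], rule per_B)
  also have "\<dots> = 2*m * card {D'\<in>chord_diagrams m. ?cs D' = 0} + 1 * card {D'\<in>chord_diagrams m. ?cs D' = 1}"
    by (simp only: sum.distrib sum_if_const[OF finite_CD])
  finally show ?thesis unfolding L_def by simp
qed


lemma CD0: "chord_diagrams 0 = {{}}"
proof
  show "chord_diagrams 0 \<subseteq> {{}}"
  proof
    fix P assume P: "P \<in> chord_diagrams 0"
    have "P = {}"
    proof (rule ccontr)
      assume "P \<noteq> {}"
      then obtain c where c: "c \<in> P" by auto
      then have "c = {}" using CD_sub[OF P c] by simp
      moreover have "card c = 2" using P c unfolding chord_diagrams_def by auto
      ultimately show False by simp
    qed
    then show "P \<in> {{}}" by simp
  qed
  show "{{}} \<subseteq> chord_diagrams 0" unfolding chord_diagrams_def by auto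
qed

lemma L0: "L 0 s = (if s = 0 then 1 else 0)"
proof -
  have "short_chords {} = {}" unfolding short_chords_def by simp
  then have "{P \<in> chord_diagrams 0. card (short_chords P) = s} = (if s = 0 then {{}} else {})"
    unfolding CD0 by auto
  then show ?thesis unfolding L_def by simp
qed

lemma vanish: "n < s \<Longrightarrow> L n s = 0"
proof (induction n arbitrary: s)
  case 0 then show ?case using L0 by simp
next
  case (Suc m)
  have "s * L (Suc m) s = s * L m s + (2*Suc m - s) * L m (s-1)" using rec_A Suc by simp
  moreover have "L m s = 0" "L m (s-1) = 0" using Suc by auto
  ultimately have "s * L (Suc m) s = 0" by simp
  then show ?case using Suc by simp
qed

lemma A1: "L (Suc m) 1 = L m 1 + (2*m+1) * L m 0"
  using rec_A[of 1 m] by simp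

lemma key: "L (Suc m) 1 = L (Suc m) 0 + L m 0"
  using A1[of m] rec_B[of m] by simp

lemma bmono: "1 \<le> m \<Longrightarrow> L m 0 \<le> L (Suc m) 0"
proof -
  assume "1 \<le> m"
  then have "L m 0 \<le> 2*m * L m 0" by simp
  then show ?thesis using rec_B[of m] by linarith
qed

lemma L10: "L 1 0 = 0" using rec_B[of 0] L0 by simp
lemma L11: "L 1 1 = 1" using A1[of 0] L0 by simp
lemma L20: "L 2 0 = 1" using rec_B[of 1] L10 L11 by (simp add: numeral_2_eq_2)
lemma L21: "L 2 1 = 1" using key[of 1] L20 L10 by (simp add: numeral_2_eq_2)
lemma L22: "L 2 2 = 1"
proof -
  have "2 * L 2 2 = 2 * L 1 2 + 2 * L 1 1" using rec_A[of 2 1] by (simp add: numeral_2_eq_2)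
  moreover have "L 1 2 = 0" by (rule vanish) simp
  ultimately show ?thesis using L11 by simp
qed

lemma step1:
  assumes m: "2 \<le> m" and IH: "L m 2 \<le> L m 1"
  shows "L (Suc m) 2 \<le> L (Suc m) 1"
proof -
  have h1: "2 * L (Suc m) 2 = 2 * L m 2 + (2*m) * L m 1" using rec_A[of 2 m] by simp
  have h2: "L (Suc m) 1 = L m 1 + (2*m+1) * L m 0" by (rule A1)
  obtain k where k: "m = Suc k" "1 \<le> k" using m by (metis Suc_le_D Suc_le_mono one_add_one plus_1_eq_Suc)
  have "L m 1 = L m 0 + L k 0" using key[of k] k by simp
  moreover have "L k 0 \<le> L m 0" using bmono[OF k(2)] k by simp
  ultimately have "L m 1 \<le> 2 * L m 0" by simp
  then have "(2*m) * L m 1 \<le> (2*m) * (2 * L m 0)" by (rule mult_le_mono2)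
  also have "\<dots> \<le> 2 * ((2*m+1) * L m 0)" by simp
  finally have "(2*m) * L m 1 \<le> 2 * ((2*m+1) * L m 0)" .
  then have "2 * L (Suc m) 2 \<le> 2 * L (Suc m) 1" using h1 h2 IH by linarith
  then show ?thesis by simp
qed

lemma step2:
  assumes s: "2 \<le> s" and IH1: "L m (Suc s) \<le> L m s" and IH2: "L m s \<le> L m (s-1)"
  shows "L (Suc m) (Suc s) \<le> L (Suc m) s"
proof -
  define c1 where "c1 = 2*Suc m - Suc s"
  define c2 where "c2 = 2*Suc m - s"
  have c12: "c1 \<le> c2" unfolding c1_def c2_def by simp
  have hA: "Suc s * L (Suc m) (Suc s) = Suc s * L m (Suc s) + c1 * L m s"
    unfolding c1_def using rec_A[of "Suc s" m] by simp
  have hB: "s * L (Suc m) s = s * L m s + c2 * L m (s-1)"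
    unfolding c2_def using rec_A[of s m] s by simp
  have "s * (Suc s * L (Suc m) (Suc s)) = s * (Suc s * L m (Suc s)) + s * (c1 * L m s)"
    using hA by (simp add: algebra_simps)
  also have "\<dots> \<le> s * (Suc s * L m s) + Suc s * (c2 * L m (s-1))"
  proof -
    have "s * (Suc s * L m (Suc s)) \<le> s * (Suc s * L m s)" using IH1 by (intro mult_le_mono2)
    moreover have "s * (c1 * L m s) \<le> Suc s * (c2 * L m (s-1))"
    proof -
      have "s \<le> Suc s" by simp
      moreover have "c1 * L m s \<le> c2 * L m (s-1)" using c12 IH2 by (rule mult_le_mono)
      ultimately show ?thesis by (rule mult_le_mono)
    qed
    ultimately show ?thesis by linarith
  qed
  also have "\<dots> = Suc s * (s * L (Suc m) s)" using hB by (simp add: algebra_simps)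
  finally have "(s * Suc s) * L (Suc m) (Suc s) \<le> (s * Suc s) * L (Suc m) s" by (simp add: algebra_simps)
  moreover have "0 < s * Suc s" using s by simp
  ultimately show ?thesis by simp
qed

lemma decr: "2 \<le> n \<Longrightarrow> 1 \<le> s \<Longrightarrow> L n (Suc s) \<le> L n s"
proof (induction n arbitrary: s rule: nat_induct_at_least)
  case base
  show ?case
  proof (cases "s = 1")
    case True then show ?thesis using L21 L22 by (simp add: numeral_2_eq_2)
  next
    case False
    then have "L 2 (Suc s) = 0" using base by (intro vanish) simp
    then show ?thesis by simp
  qed
next
  case (Suc m)
  show ?case
  proof (cases "s = 1")
    case True
    have "L m 2 \<le> L m 1" using Suc.IH[of 1] by (simp add: numeral_2_eq_2)
    then show ?thesis using step1[OF Suc.hyps] True by (simp add: numeral_2_eq_2)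
  next
    case False
    then have s2: "2 \<le> s" using Suc.prems by simp
    have "L m (Suc s) \<le> L m s" using Suc.IH Suc.prems by simp
    moreover have "L m (Suc (s-1)) \<le> L m (s-1)" by (rule Suc.IH) (use s2 in simp)
    moreover have "Suc (s-1) = s" using s2 by simp
    ultimately show ?thesis using step2[OF s2, of m] by simp
  qed
qed

theorem theorem1:
  fixes n :: nat
  assumes "n \<ge> 1"
  shows "\<exists>m\<le>n. (\<forall>s. s < m \<longrightarrow> L n s \<le> L n (Suc s))
                 \<and> (\<forall>s. m \<le> s \<and> s < n \<longrightarrow> L n (Suc s) \<le> L n s)"
proof (cases "n = 1")
  case True
  then show ?thesis using L10 by (intro exI[of _ 1]) auto
next
  case False
  then have n2: "2 \<le> n" using assms by simp
  obtain k where k: "n = Suc k" using n2 by (cases n) auto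
  have "L n 0 \<le> L n 1" using key[of k] k by simp
  moreover have "\<forall>s. 1 \<le> s \<and> s < n \<longrightarrow> L n (Suc s) \<le> L n s" using decr n2 by blast
  ultimately show ?thesis using n2 by (intro exI[of _ 1]) auto
qed

end
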